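(* Let $E$ and $F$ be finite cyclic groups. Then $g(OD(E\oplus F))=3$ if and only if at least one of the following holds: (a) $|E|$ is composite; (b) $|F|$ is composite; (c) $|E|$ and $|F|$ are distinct primes.
   Context: $E\oplus F$ denotes the external direct product of $E$ and $F$. For a finite group $G$, $o(x)$ denotes the order of $x\in G$. The order-divisor graph $OD(G)$ is the simple undirected graph with vertex set $G$, in which two distinct vertices $x,y$ are adjacent if and only if $o(x)\neq o(y)$ and either $o(x)\mid o(y)$ or $o(y)\mid o(x)$. The girth $g(\Gamma)$ of a graph $\Gamma$ is the length of a shortest cycle in $\Gamma$ (taken to be $0$ if $\Gamma$ has no cycle). *)

theory Defs
  imports "HOL-Algebra.Algebra"
begin

definition od_adj :: "('a, 'b) monoid_scheme \<Rightarrow> 'a \<Rightarrow> 'a \<Rightarrow> bool" where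
  "od_adj G x y \<longleftrightarrow> x \<in> carrier G \<and> y \<in> carrier G \<and> x \<noteq> y \<and>
     group.ord G x \<noteq> group.ord G y \<and>
     (group.ord G x dvd group.ord G y \<or> group.ord G y dvd group.ord G x)"

definition is_cycle :: "'a set \<Rightarrow> ('a \<Rightarrow> 'a \<Rightarrow> bool) \<Rightarrow> 'a list \<Rightarrow> bool" where
  "is_cycle V adj cs \<longleftrightarrow> 3 \<le> length cs \<and> distinct cs \<and> set cs \<subseteq> V \<and>
     (\<forall>i < length cs. adj (cs ! i) (cs ! (Suc i mod length cs)))"

definition girth :: "'a set \<Rightarrow> ('a \<Rightarrow> 'a \<Rightarrow> bool) \<Rightarrow> nat" where
  "girth V adj = (if \<exists>cs. is_cycle V adj cs
                  then (LEAST n. \<exists>cs. is_cycle V adj cs \<and> length cs = n) else 0)"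

definition od_girth :: "('a, 'b) monoid_scheme \<Rightarrow> nat" where
  "od_girth G = girth (carrier G) (od_adj G)"

definition composite :: "nat \<Rightarrow> bool" where
  "composite n \<longleftrightarrow> 1 < n \<and> \<not> Factorial_Ring.prime n"

end

theory Submission
  imports Defs
begin

lemma pow_DirProd:
  "(x, y) [^]\<^bsub>G \<times>\<times> H\<^esub> (n::nat) = (x [^]\<^bsub>G\<^esub> n, y [^]\<^bsub>H\<^esub> n)"
  by (induction n) auto

lemma ord_DirProd:
  assumes "group G" "group H" "x \<in> carrier G" "y \<in> carrier H"
  shows "group.ord (G \<times>\<times> H) (x, y) = lcm (group.ord G x) (group.ord H y)"
proof -
  interpret G: group G by fact
  interpret H: group H by fact
  interpret GH: group "G \<times>\<times> H" using DirProd_group assms by blast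
  show ?thesis
    using assms(3,4)
    by (simp add: GH.ord_unique pow_DirProd G.pow_eq_id[symmetric] H.pow_eq_id[symmetric])
qed

lemma cyclic_exists_ord:
  assumes "group G" "finite (carrier G)" "cyclic_group G" "d dvd order G"
  shows "\<exists>x\<in>carrier G. group.ord G x = d"
proof -
  interpret G: group G by fact
  obtain g where g: "g \<in> carrier G" "subgroup_generated G {g} = G"
    using assms(3) unfolding cyclic_group_def by blast
  have og: "G.ord g = order G" using G.cyclic_order_is_ord[OF g(1)] g(2) by simp
  have m0: "order G > 0" using assms(2) G.order_gt_0_iff_finite by blast
  have d0: "d > 0" using assms(4) m0 by (metis dvd_0_left_iff gr0I less_numeral_extra(3))
  define k where "k = order G div d"
  have mk: "order G = d * k" using assms(4) k_def by simp
  have kd: "k dvd G.ord g" using og mk by simp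
  have k0: "k \<noteq> 0" using mk m0 by (cases "k = 0") auto
  have "G.ord (g [^]\<^bsub>G\<^esub> k) = d"
    using G.ord_pow[OF g(1) kd k0] og mk k0 by simp
  then show ?thesis using g(1) by blast
qed

lemma girth3_iff:
  "girth V adj = 3 \<longleftrightarrow> (\<exists>cs. is_cycle V adj cs \<and> length cs = 3)"
proof
  assume h: "girth V adj = 3"
  then have ex: "\<exists>cs. is_cycle V adj cs" unfolding girth_def by (metis zero_neq_numeral)
  then have "(LEAST n. \<exists>cs. is_cycle V adj cs \<and> length cs = n) = 3" using h unfolding girth_def by simp
  moreover have "\<exists>cs. is_cycle V adj cs \<and> length cs = (LEAST n. \<exists>cs. is_cycle V adj cs \<and> length cs = n)"
  proof -
    obtain cs where "is_cycle V adj cs" using ex by blast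
    then have "\<exists>n. \<exists>cs. is_cycle V adj cs \<and> length cs = n" by blast
    then show ?thesis by (rule LeastI_ex)
  qed
  ultimately show "\<exists>cs. is_cycle V adj cs \<and> length cs = 3" by simp
next
  assume h: "\<exists>cs. is_cycle V adj cs \<and> length cs = 3"
  have "(LEAST n. \<exists>cs. is_cycle V adj cs \<and> length cs = n) = 3"
    apply (rule Least_equality)
    using h apply blast
    unfolding is_cycle_def by auto
  then show "girth V adj = 3" using h unfolding girth_def by auto
qed

lemma all3: "(\<forall>i < (3::nat). P i) \<longleftrightarrow> P 0 \<and> P 1 \<and> P 2"
proof
  assume "\<forall>i<3. P i" then show "P 0 \<and> P 1 \<and> P 2" by simp
next
  assume h: "P 0 \<and> P 1 \<and> P 2"
  show "\<forall>i<3. P i"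
  proof (intro allI impI)
    fix i :: nat assume "i < 3"
    then have "i = 0 \<or> i = 1 \<or> i = 2" by auto
    then show "P i" using h by auto
  qed
qed
lemma cycle3:
  "is_cycle V adj [a, b, c] \<longleftrightarrow> distinct [a,b,c] \<and> {a,b,c} \<subseteq> V \<and> adj a b \<and> adj b c \<and> adj c a"
proof -
  have len3: "length [a,b,c] = 3" by simp
  show ?thesis unfolding is_cycle_def len3 all3 by simp
qed

lemma od_girth3_iff:
  "od_girth G = 3 \<longleftrightarrow> (\<exists>a b c. od_adj G a b \<and> od_adj G b c \<and> od_adj G c a)"
proof
  assume "od_girth G = 3"
  then obtain cs where cs: "is_cycle (carrier G) (od_adj G) cs" "length cs = 3"
    unfolding od_girth_def girth3_iff by blast
  have "\<exists>a b c. cs = [a,b,c]" using cs(2) by (auto simp: numeral_3_eq_3 length_Suc_conv)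
  then obtain a b c where e: "cs = [a,b,c]" by blast
  have "od_adj G a b \<and> od_adj G b c \<and> od_adj G c a" using cs(1) unfolding e cycle3 by blast
  then show "\<exists>a b c. od_adj G a b \<and> od_adj G b c \<and> od_adj G c a" by blast
next
  assume "\<exists>a b c. od_adj G a b \<and> od_adj G b c \<and> od_adj G c a"
  then obtain a b c where h: "od_adj G a b" "od_adj G b c" "od_adj G c a" by blast
  then have "is_cycle (carrier G) (od_adj G) [a,b,c]"
    unfolding cycle3 by (auto simp: od_adj_def)
  then show "od_girth G = 3" unfolding od_girth_def girth3_iff by (intro exI[of _ "[a,b,c]"]) simp
qed

lemma tri:
  assumes "a \<in> carrier G" "b \<in> carrier G" "c \<in> carrier G"
    "group.ord G a dvd group.ord G b" "group.ord G b dvd group.ord G c"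
    "group.ord G a \<noteq> group.ord G b" "group.ord G b \<noteq> group.ord G c" "group.ord G a \<noteq> group.ord G c"
  shows "od_girth G = 3"
proof -
  have ac: "group.ord G a dvd group.ord G c" using assms(4,5) by (rule dvd_trans)
  have "a \<noteq> b" "b \<noteq> c" "a \<noteq> c" using assms(6-8) by auto
  then have "od_adj G a b \<and> od_adj G b c \<and> od_adj G c a"
    using assms ac unfolding od_adj_def by simp
  then show ?thesis unfolding od_girth3_iff by blast
qed

theorem mainTheorem10:
  fixes E :: "('a, 'c) monoid_scheme" and F :: "('b, 'd) monoid_scheme"
  assumes "group E" "group F"
    and "finite (carrier E)" "finite (carrier F)"
    and "cyclic_group E" "cyclic_group F"
  shows "od_girth (DirProd E F) = 3 \<longleftrightarrow>
           (composite (order E) \<or> composite (order F) \<or>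
            (Factorial_Ring.prime (order E) \<and> Factorial_Ring.prime (order F) \<and> order E \<noteq> order F))"
proof -
  interpret E: group E by fact
  interpret F: group F by fact
  have grEF: "group (E \<times>\<times> F)" by (rule DirProd_group[OF assms(1,2)])
  interpret EF: group "E \<times>\<times> F" by (rule grEF)
  have m0: "order E > 0" using assms(3) by (simp add: E.order_gt_0_iff_finite)
  have n0: "order F > 0" using assms(4) by (simp add: F.order_gt_0_iff_finite)
  obtain g where g: "g \<in> carrier E" "E.ord g = order E"
    using cyclic_exists_ord[OF assms(1,3,5) dvd_refl] by blast
  obtain h where h: "h \<in> carrier F" "F.ord h = order F"
    using cyclic_exists_ord[OF assms(2,4,6) dvd_refl] by blast
  have ordp: "EF.ord (x, y) = lcm (E.ord x) (F.ord y)" if "x \<in> carrier E" "y \<in> carrier F" for x y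
    using ord_DirProd[OF assms(1,2) that] .
  show ?thesis
  proof
    assume g3: "od_girth (E \<times>\<times> F) = 3"
    show "composite (order E) \<or> composite (order F) \<or>
            (Factorial_Ring.prime (order E) \<and> Factorial_Ring.prime (order F) \<and> order E \<noteq> order F)"
    proof (rule ccontr)
      assume nc: "\<not> ?thesis"
      have mE: "order E = 1 \<or> Factorial_Ring.prime (order E)" using nc m0 unfolding composite_def by auto
      have mF: "order F = 1 \<or> Factorial_Ring.prime (order F)" using nc n0 unfolding composite_def by auto
      define L where "L = lcm (order E) (order F)"
      have L: "L = 1 \<or> Factorial_Ring.prime L"
      proof (cases "order E = 1")
        case True then show ?thesis using mF unfolding L_def by simp
      next
        case False
        then have pE: "Factorial_Ring.prime (order E)" using mE by simp
        show ?thesis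
        proof (cases "order F = 1")
          case True then show ?thesis using pE unfolding L_def by simp
        next
          case False
          then have "Factorial_Ring.prime (order F)" using mF by simp
          then have "order E = order F" using nc pE by blast
          then show ?thesis using pE unfolding L_def by simp
        qed
      qed
      have dvdL: "EF.ord z dvd L" if zc: "z \<in> carrier (E \<times>\<times> F)" for z
      proof -
        obtain x y where z: "z = (x, y)" "x \<in> carrier E" "y \<in> carrier F" using zc by auto
        have "E.ord x dvd L" unfolding L_def by (rule dvd_trans[OF E.ord_dvd_group_order[OF z(2)]]) simp
        moreover have "F.ord y dvd L" unfolding L_def by (rule dvd_trans[OF F.ord_dvd_group_order[OF z(3)]]) simp
        ultimately show ?thesis using ordp z by simp
      qed
      obtain a b c where abc: "od_adj (E \<times>\<times> F) a b" "od_adj (E \<times>\<times> F) b c" "od_adj (E \<times>\<times> F) c a"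
        using g3 unfolding od_girth3_iff by blast
      have da: "EF.ord a dvd L" and db: "EF.ord b dvd L" and dc: "EF.ord c dvd L"
        using abc dvdL unfolding od_adj_def by auto
      have ne: "EF.ord a \<noteq> EF.ord b" "EF.ord b \<noteq> EF.ord c" "EF.ord c \<noteq> EF.ord a"
        using abc unfolding od_adj_def by auto
      show False
      proof (cases "L = 1")
        case True then show ?thesis using da db ne by simp
      next
        case False
        then have "Factorial_Ring.prime L" using L by simp
        then have dd: "\<And>d. d dvd L \<Longrightarrow> d = 1 \<or> d = L" by (simp add: prime_nat_iff)
        have "EF.ord a = 1 \<or> EF.ord a = L" using dd[OF da] .
        moreover have "EF.ord b = 1 \<or> EF.ord b = L" using dd[OF db] .
        moreover have "EF.ord c = 1 \<or> EF.ord c = L" using dd[OF dc] .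
        ultimately show ?thesis using ne by argo
      qed
    qed
  next
    assume cond: "composite (order E) \<or> composite (order F) \<or>
            (Factorial_Ring.prime (order E) \<and> Factorial_Ring.prime (order F) \<and> order E \<noteq> order F)"
    have o1: "EF.ord (\<one>\<^bsub>E\<^esub>, \<one>\<^bsub>F\<^esub>) = 1" using ordp by simp
    consider "composite (order E)" | "composite (order F)"
      | "Factorial_Ring.prime (order E)" "Factorial_Ring.prime (order F)" "order E \<noteq> order F" using cond by blast
    then show "od_girth (E \<times>\<times> F) = 3"
    proof cases
      case 1
      then have c1: "order E \<noteq> 1" "\<not> Factorial_Ring.prime (order E)" unfolding composite_def by auto
      obtain p where p0: "Factorial_Ring.prime p" "p dvd order E" using prime_factor_nat[OF c1(1)] by blast
      have p: "Factorial_Ring.prime p" "p dvd order E" "p \<noteq> order E" using p0 c1(2) by auto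
      obtain x where x: "x \<in> carrier E" "E.ord x = p" using cyclic_exists_ord[OF assms(1,3,5) p(2)] by blast
      show ?thesis
      proof -
        have "EF.ord (x, \<one>\<^bsub>F\<^esub>) = p" using ordp[OF x(1)] x by simp
        moreover have "EF.ord (g, \<one>\<^bsub>F\<^esub>) = order E" using ordp[OF g(1)] g by simp
        moreover have "p \<noteq> 1" using p(1) by auto
        ultimately show ?thesis using o1 p x(1) g(1) c1(1) by (intro tri[of "(\<one>\<^bsub>E\<^esub>, \<one>\<^bsub>F\<^esub>)" _ "(x, \<one>\<^bsub>F\<^esub>)" "(g, \<one>\<^bsub>F\<^esub>)"]) simp_all
      qed
    next
      case 2
      then have c1: "order F \<noteq> 1" "\<not> Factorial_Ring.prime (order F)" unfolding composite_def by auto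
      obtain p where p0: "Factorial_Ring.prime p" "p dvd order F" using prime_factor_nat[OF c1(1)] by blast
      have p: "Factorial_Ring.prime p" "p dvd order F" "p \<noteq> order F" using p0 c1(2) by auto
      obtain x where x: "x \<in> carrier F" "F.ord x = p" using cyclic_exists_ord[OF assms(2,4,6) p(2)] by blast
      show ?thesis
      proof -
        have "EF.ord (\<one>\<^bsub>E\<^esub>, x) = p" using ordp[OF _ x(1)] x by simp
        moreover have "EF.ord (\<one>\<^bsub>E\<^esub>, h) = order F" using ordp[OF _ h(1)] h by simp
        moreover have "p \<noteq> 1" using p(1) by auto
        ultimately show ?thesis using o1 p x(1) h(1) c1(1) by (intro tri[of "(\<one>\<^bsub>E\<^esub>, \<one>\<^bsub>F\<^esub>)" _ "(\<one>\<^bsub>E\<^esub>, x)" "(\<one>\<^bsub>E\<^esub>, h)"]) simp_all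
      qed
    next
      case 3
      have l1: "lcm (order E) (order F) \<noteq> order E"
      proof
        assume "lcm (order E) (order F) = order E"
        then have "order F dvd order E" by (metis dvd_lcm2)
        then show False using 3 primes_dvd_imp_eq by metis
      qed
      have l2: "lcm (order E) (order F) \<noteq> 1"
      proof
        assume "lcm (order E) (order F) = 1"
        then have "order E dvd 1" by (metis dvd_lcm1)
        then show False using 3 by simp
      qed
      show ?thesis
      proof -
        have e1: "EF.ord (g, \<one>\<^bsub>F\<^esub>) = order E" using ordp[OF g(1)] g by simp
        have e2: "EF.ord (g, h) = lcm (order E) (order F)" using ordp[OF g(1) h(1)] g h by simp
        have ne1: "order E \<noteq> 1" using 3 by auto
        have c1: "(\<one>\<^bsub>E\<^esub>, \<one>\<^bsub>F\<^esub>) \<in> carrier (E \<times>\<times> F)" by simp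
        have c2: "(g, \<one>\<^bsub>F\<^esub>) \<in> carrier (E \<times>\<times> F)" using g(1) by simp
        have c3: "(g, h) \<in> carrier (E \<times>\<times> F)" using g(1) h(1) by simp
        have d1: "EF.ord (\<one>\<^bsub>E\<^esub>, \<one>\<^bsub>F\<^esub>) dvd EF.ord (g, \<one>\<^bsub>F\<^esub>)" using o1 by simp
        have d2: "EF.ord (g, \<one>\<^bsub>F\<^esub>) dvd EF.ord (g, h)" using e1 e2 by simp
        have n1: "EF.ord (\<one>\<^bsub>E\<^esub>, \<one>\<^bsub>F\<^esub>) \<noteq> EF.ord (g, \<one>\<^bsub>F\<^esub>)" using o1 e1 ne1 by simp
        have n2: "EF.ord (g, \<one>\<^bsub>F\<^esub>) \<noteq> EF.ord (g, h)" using e1 e2 l1 by metis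
        have n3: "EF.ord (\<one>\<^bsub>E\<^esub>, \<one>\<^bsub>F\<^esub>) \<noteq> EF.ord (g, h)" using o1 e2 l2 by metis
        show ?thesis by (rule tri[OF c1 c2 c3 d1 d2 n1 n2 n3])
      qed
    qed
  qed
qed

end
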